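(* For every $A\in P(n)$, $$I(2,A)=\inf\Big\{\Big(\sum_{i=1}^n D_{ii}^{-2}\Big)^{-1/2}: D>0 \text{ diagonal},\ A\circ\bar A\le D^2\Big\}=\inf\{I(2,D): D>0 \text{ diagonal},\ A\circ\bar A\le D^2\}.$$
   Context: $P(n)$ denotes positive semidefinite complex $n\times n$ matrices, $\circ$ the Hadamard product, $\bar A$ the entrywise conjugate, $\le$ the Loewner order. $I(2,C)=\min\{\|C\circ B\|_2: B\in P(n),\ \|B\|_2=1\}$ with $\|\cdot\|_2$ the Frobenius norm. *)

theory Defs
  imports "HOL-Analysis.Analysis"
begin

definition psd :: "complex^'n^'n \<Rightarrow> bool" where
  "psd A \<longleftrightarrow> (\<forall>i j. A$i$j = cnj (A$j$i)) \<and>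
     (\<forall>x::complex^'n. 0 \<le> Re (\<Sum>i\<in>UNIV. \<Sum>j\<in>UNIV. cnj (x$i) * A$i$j * x$j))"

definition loewner_le :: "complex^'n^'n \<Rightarrow> complex^'n^'n \<Rightarrow> bool" where
  "loewner_le A B \<longleftrightarrow> psd (B - A)"

definition hadamard :: "complex^'n^'n \<Rightarrow> complex^'n^'n \<Rightarrow> complex^'n^'n" where
  "hadamard A B = (\<chi> i j. A$i$j * B$i$j)"

definition conj_mat :: "complex^'n^'n \<Rightarrow> complex^'n^'n" where
  "conj_mat A = (\<chi> i j. cnj (A$i$j))"

definition frob :: "complex^'n^'n \<Rightarrow> real" where
  "frob A = sqrt (\<Sum>i\<in>UNIV. \<Sum>j\<in>UNIV. (cmod (A$i$j))\<^sup>2)"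

text \<open>I(2,C) = min { ||C o B||_2 : B psd, ||B||_2 = 1 } (the min is attained; we write Inf).\<close>
definition I2 :: "complex^'n^'n \<Rightarrow> real" where
  "I2 C = Inf {frob (hadamard C B) | B. psd B \<and> frob B = 1}"

definition pos_diag :: "complex^'n^'n \<Rightarrow> bool" where
  "pos_diag D \<longleftrightarrow> (\<forall>i j. i \<noteq> j \<longrightarrow> D$i$j = 0) \<and> (\<forall>i. Im (D$i$i) = 0 \<and> Re (D$i$i) > 0)"

end

theory Submission
  imports Defs
begin

definition qf :: "complex^'n^'n \<Rightarrow> complex^'n \<Rightarrow> complex^'n \<Rightarrow> complex" where
  "qf M x y = (\<Sum>i\<in>UNIV. \<Sum>j\<in>UNIV. cnj (x$i) * M$i$j * y$j)"

definition herm :: "complex^'n^'n \<Rightarrow> bool" where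
  "herm M \<longleftrightarrow> (\<forall>i j. M$i$j = cnj (M$j$i))"

lemma psd_iff: "psd M \<longleftrightarrow> herm M \<and> (\<forall>x. 0 \<le> Re (qf M x x))"
  unfolding psd_def herm_def qf_def by simp

lemma qf_mv: "qf M x y = (\<Sum>i\<in>UNIV. cnj (x$i) * (M *v y)$i)"
  unfolding qf_def matrix_vector_mult_def by (simp add: sum_distrib_left mult.assoc)

lemma qf_add_left: "qf M (x + y) z = qf M x z + qf M y z"
  unfolding qf_mv by (simp add: algebra_simps sum.distrib)
lemma qf_add_right: "qf M x (y + z) = qf M x y + qf M x z"
  unfolding qf_def by (simp add: algebra_simps sum.distrib)
lemma qf_smult_left: "qf M (c *s x) z = cnj c * qf M x z"
  unfolding qf_mv by (simp add: algebra_simps sum_distrib_left)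
lemma qf_smult_right: "qf M x (c *s z) = c * qf M x z"
  unfolding qf_def by (simp add: algebra_simps sum_distrib_left)
lemma qf_herm: assumes "herm M" shows "qf M x y = cnj (qf M y x)"
proof -
  have c: "cnj (M$i$j) = M$j$i" for i j using assms unfolding herm_def by (metis complex_cnj_cnj)
  have "cnj (qf M y x) = (\<Sum>i\<in>UNIV. \<Sum>j\<in>UNIV. y$i * M$j$i * cnj (x$j))"
    unfolding qf_def by (simp add: c)
  also have "... = (\<Sum>j\<in>UNIV. \<Sum>i\<in>UNIV. y$i * M$j$i * cnj (x$j))" by (rule sum.swap)
  also have "... = qf M x y" unfolding qf_def by (intro sum.cong refl) (simp add: algebra_simps)
  finally show ?thesis by simp
qed

lemma psd_zero_mv:
  assumes P: "psd P" and z: "Re (qf P v v) = 0"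
  shows "P *v v = 0"
proof -
  define y where "y = P *v v"
  define s where "s = (\<Sum>i\<in>UNIV. (cmod (y$i))\<^sup>2)"
  define q where "q = Re (qf P y y)"
  have h: "herm P" and pos: "\<And>x. 0 \<le> Re (qf P x x)" using P psd_iff by auto
  have q0: "q \<ge> 0" using pos q_def by auto
  have yv: "qf P y v = of_real s"
    unfolding qf_mv s_def y_def[symmetric]
    by (simp add: of_real_sum complex_norm_square mult.commute del: of_real_power)
  have vy: "qf P v y = of_real s" using qf_herm[OF h, of v y] yv by simp
  have exp: "Re (qf P (v + of_real t *s y) (v + of_real t *s y)) = 2 * t * s + t\<^sup>2 * q" for t
    unfolding qf_add_left qf_add_right qf_smult_left qf_smult_right
    using z yv vy by (simp add: q_def power2_eq_square algebra_simps)
  have s0: "s \<ge> 0" unfolding s_def by (simp add: sum_nonneg)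
  have "s = 0"
  proof (rule ccontr)
    assume "s \<noteq> 0" then have sp: "s > 0" using s0 by simp
    define t where "t = - s / (q + 1)"
    have "0 \<le> 2 * t * s + t\<^sup>2 * q" using pos[of "v + of_real t *s y"] exp[of t] by simp
    also have "... = t * (2 * s + t * q)" by (simp add: power2_eq_square algebra_simps)
    also have "... < 0"
    proof (rule mult_neg_pos)
      show "t < 0" using sp q0 by (simp add: t_def)
      have "q / (q + 1) < 2" using q0 by (simp add: field_simps)
      then have "s * (q / (q+1)) < s * 2" using sp by (simp only: mult_less_cancel_left_pos)
      then show "0 < 2 * s + t * q" by (simp add: t_def field_simps)
    qed
    finally show False by simp
  qed
  then have "\<forall>i. y$i = 0" unfolding s_def by (simp add: sum_nonneg_eq_0_iff)
  then show ?thesis unfolding y_def by (simp add: vec_eq_iff)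
qed

lemma norm_sq_vec: "(norm (x::complex^'n))\<^sup>2 = (\<Sum>i\<in>UNIV. (cmod (x$i))\<^sup>2)"
  unfolding norm_vec_def L2_set_def by (simp add: sum_nonneg)

lemma sum_cnj_self: "(\<Sum>i\<in>UNIV. cnj (x$i) * x$i) = of_real ((norm (x::complex^'n))\<^sup>2)"
  unfolding norm_sq_vec by (simp add: of_real_sum complex_norm_square mult.commute del: of_real_power)

lemma kernel_subspace: "subspace {x::complex^'n. M *v x = 0}"
  using matrix_vector_mul_linear[of M] unfolding subspace_def
  by (auto simp: linear_add linear_scale linear_0)

lemma qf_cont: "continuous_on S (\<lambda>x. Re (qf M x x))"
  unfolding qf_def by (intro continuous_intros)

lemma qf_zero_left[simp]: "qf M 0 y = 0" unfolding qf_def by simp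

lemma qf_diff: "qf (M - N) x y = qf M x y - qf N x y"
  unfolding qf_def by (simp add: algebra_simps sum_subtractf)

lemma qf_scal_id: "qf (\<chi> i j. if i = j then c else 0) x x = c * (\<Sum>i\<in>UNIV. cnj (x$i) * x$i)"
proof -
  have "qf (\<chi> i j. if i = j then c else 0) x x = (\<Sum>i\<in>UNIV. \<Sum>j\<in>UNIV. if i = j then cnj (x$i) * c * x$j else 0)"
    unfolding qf_def by (intro sum.cong refl) auto
  also have "... = (\<Sum>i\<in>UNIV. cnj (x$i) * c * x$i)" by simp
  finally show ?thesis by (simp add: sum_distrib_left algebra_simps)
qed

lemma mv_axis: "(M *v axis j (1::complex))$i = M$i$j"
proof -
  have "(M *v axis j (1::complex))$i = (\<Sum>k\<in>UNIV. if k = j then M$i$k else 0)"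
    unfolding matrix_vector_mult_def axis_def vec_lambda_beta by (intro sum.cong refl) auto
  then show ?thesis by simp
qed

lemma mv_scal_id: "(\<chi> i j. if i = j then c else 0) *v x = c *s (x::complex^'n)"
proof -
  have "((\<chi> i j. if i = j then c else 0) *v x)$i = c * x$i" for i
  proof -
    have "((\<chi> i j. if i = j then c else 0) *v x)$i = (\<Sum>j\<in>UNIV. if i = j then c * x$j else 0)"
      unfolding matrix_vector_mult_def vec_lambda_beta by (intro sum.cong refl) auto
    then show ?thesis by simp
  qed
  then show ?thesis by (simp add: vec_eq_iff)
qed

lemma mv_diff: "(M - N) *v x = M *v x - N *v (x::complex^'n)"
  by (simp add: vec_eq_iff matrix_vector_mult_def algebra_simps sum_subtractf)

lemma qf_le_max:
  fixes B :: "complex^'n^'n"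
  assumes vmax: "\<forall>y\<in>sphere 0 1. Re (qf B y y) \<le> lam"
  shows "Re (qf B x x) \<le> lam * (norm x)\<^sup>2"
proof (cases "x = 0")
  case True then show ?thesis by simp
next
  case False
  define y where "y = (1 / norm x) *\<^sub>R x"
  have "norm y = \<bar>1 / norm x\<bar> * norm x" unfolding y_def by (rule norm_scaleR)
  also have "... = 1" using False by simp
  finally have "norm y = 1" .
  then have ny: "y \<in> sphere 0 1" by simp
  have ys: "y = complex_of_real (1 / norm x) *s x"
    unfolding y_def by (rule vec_eq_iff[THEN iffD2], rule allI, simp only: vector_scaleR_component vector_smult_component, simp add: scaleR_conv_of_real)
  have "qf B y y = complex_of_real ((1 / norm x)\<^sup>2) * qf B x x"
    unfolding ys qf_smult_left qf_smult_right by (simp add: power2_eq_square)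
  then have "Re (qf B y y) = (1 / norm x)\<^sup>2 * Re (qf B x x)" by simp
  then have "(1 / norm x)\<^sup>2 * Re (qf B x x) \<le> lam" using vmax ny by metis
  then show ?thesis using False by (simp add: field_simps power2_eq_square)
qed

definition outer :: "complex \<Rightarrow> complex^'n \<Rightarrow> complex^'n^'n" where
  "outer c v = (\<chi> i j. c * v$i * cnj (v$j))"

lemma eigen_exists:
  fixes B :: "complex^'n^'n"
  assumes P: "psd B" and nz: "B \<noteq> 0"
  shows "\<exists>v lam. norm v = 1 \<and> lam > 0 \<and> B *v v = of_real lam *s v"
proof -
  have "\<exists>v\<in>sphere (0::complex^'n) 1. \<forall>y\<in>sphere 0 1. Re (qf B y y) \<le> Re (qf B v v)"
  proof (rule continuous_attains_sup)
    show "compact (sphere (0::complex^'n) 1)" by simp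
    have "norm (axis undefined 1 :: complex^'n) = 1" by simp
    then show "sphere (0::complex^'n) 1 \<noteq> {}" by (metis mem_sphere_0 empty_iff)
    show "continuous_on (sphere 0 1) (\<lambda>y. Re (qf B y y))" by (rule qf_cont)
  qed
  then obtain v where v: "norm v = 1" and vmax: "\<forall>y\<in>sphere 0 1. Re (qf B y y) \<le> Re (qf B v v)"
    by auto
  define lam where "lam = Re (qf B v v)"
  have le: "\<And>x. Re (qf B x x) \<le> lam * (norm x)\<^sup>2" using qf_le_max vmax lam_def by blast
  have hB: "herm B" and posB: "\<And>x. 0 \<le> Re (qf B x x)" using P psd_iff by auto
  define Q where "Q = (\<chi> i j. (if i = j then of_real lam else 0)) - B"
  have qfQ: "qf Q x x = of_real lam * of_real ((norm x)\<^sup>2) - qf B x x" for x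
    unfolding Q_def qf_diff qf_scal_id sum_cnj_self ..
  have hQ: "herm Q" unfolding herm_def
  proof (intro allI)
    fix i j
    have "B$i$j = cnj (B$j$i)" using hB unfolding herm_def by blast
    then show "Q$i$j = cnj (Q$j$i)" unfolding Q_def by simp
  qed
  have "0 \<le> Re (qf Q x x)" for x
  proof -
    have "Re (qf Q x x) = lam * (norm x)\<^sup>2 - Re (qf B x x)" unfolding qfQ by simp
    then show ?thesis using le[of x] by simp
  qed
  then have psdQ: "psd Q" unfolding psd_iff using hQ by blast
  have "Re (qf Q v v) = 0" unfolding qfQ using v lam_def by simp
  then have "Q *v v = 0" using psd_zero_mv psdQ by blast
  then have Bv: "B *v v = of_real lam *s v"
    unfolding Q_def mv_diff mv_scal_id by simp
  have "lam > 0"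
  proof (rule ccontr)
    assume "\<not> lam > 0"
    then have "lam \<le> 0" by simp
    have "Re (qf B x x) = 0" for x using le[of x] posB[of x] \<open>lam \<le> 0\<close>
    proof -
      have "lam * (norm x)\<^sup>2 \<le> 0" using \<open>lam \<le> 0\<close> by (simp add: mult_nonpos_nonneg)
      then show ?thesis using le[of x] posB[of x] by linarith
    qed
    then have "B *v x = 0" for x using psd_zero_mv P by blast
    then have "B = 0"
      by (metis mv_axis vec_eq_iff zero_index)
    then show False using nz by simp
  qed
  then show ?thesis using v Bv by auto
qed

definition ip :: "complex^'n \<Rightarrow> complex^'n \<Rightarrow> complex" where
  "ip u x = (\<Sum>i\<in>UNIV. cnj (u$i) * x$i)"

lemma ip_cnj: "ip x y = cnj (ip y x)"
  unfolding ip_def by (simp add: mult.commute)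

lemma qf_decomp:
  assumes "\<forall>i j. M$i$j = (\<Sum>k<r. g k $ i * cnj (g k $ j))"
  shows "qf M x y = (\<Sum>k<r. ip x (g k) * ip (g k) y)"
proof -
  have "qf M x y = (\<Sum>i\<in>UNIV. \<Sum>j\<in>UNIV. \<Sum>k<r. (cnj (x$i) * g k $ i) * (cnj (g k $ j) * y$j))"
    unfolding qf_def using assms by (simp add: sum_distrib_left sum_distrib_right algebra_simps)
  also have "... = (\<Sum>i\<in>UNIV. \<Sum>k<r. \<Sum>j\<in>UNIV. (cnj (x$i) * g k $ i) * (cnj (g k $ j) * y$j))"
    by (intro sum.cong refl) (rule sum.swap)
  also have "... = (\<Sum>k<r. \<Sum>i\<in>UNIV. \<Sum>j\<in>UNIV. (cnj (x$i) * g k $ i) * (cnj (g k $ j) * y$j))"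
    by (rule sum.swap)
  also have "... = (\<Sum>k<r. ip x (g k) * ip (g k) y)"
    unfolding ip_def by (simp add: sum_product)
  finally show ?thesis .
qed

lemma mv_outer: "(outer c v *v x)$i = c * v$i * ip v x"
  unfolding outer_def matrix_vector_mult_def ip_def
  by (simp add: sum_distrib_left algebra_simps)

lemma qf_outer: "qf (outer c v) x y = c * ip x v * ip v y"
  unfolding qf_mv mv_outer unfolding ip_def
  by (simp add: sum_distrib_left sum_distrib_right algebra_simps)

lemma qf_mv_ip: "qf M x y = ip x (M *v y)"
  unfolding qf_mv ip_def ..

lemma ip_smult_right: "ip u (c *s x) = c * ip u x"
  unfolding ip_def by (simp add: sum_distrib_left algebra_simps)
lemma ip_smult_left: "ip (c *s u) x = cnj c * ip u x"
  unfolding ip_def by (simp add: sum_distrib_left algebra_simps)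
lemma ip_diff_right: "ip u (x - y) = ip u x - ip u y"
  unfolding ip_def by (simp add: algebra_simps sum_subtractf)
lemma ip_zero_right[simp]: "ip u 0 = 0" unfolding ip_def by simp

lemma spectral:
  fixes B :: "complex^'n^'n"
  assumes "psd B"
  shows "\<exists>(r::nat) g. (\<forall>k<r. \<forall>l<r. k \<noteq> l \<longrightarrow> ip (g k) (g l) = 0) \<and>
           (\<forall>i j. B$i$j = (\<Sum>k<r. g k $ i * cnj (g k $ j)))"
  using assms
proof (induction "DIM(complex^'n) - dim {x::complex^'n. B *v x = 0}" arbitrary: B rule: less_induct)
  case less
  show ?case
  proof (cases "B = 0")
    case True show ?thesis by (rule exI[where x="0::nat"]) (simp add: True)
  next
    case False
    obtain v lam where v: "norm v = 1" and lp: "lam > 0" and Bv: "B *v v = of_real lam *s v"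
      using eigen_exists[OF less.prems False] by blast
    have hB: "herm B" and posB: "\<And>x. 0 \<le> Re (qf B x x)" using less.prems psd_iff by auto
    define B' where "B' = B - outer (of_real lam) v"
    have vv: "ip v v = 1" unfolding ip_def using sum_cnj_self[of v] v by simp
    have B'v: "B' *v v = 0"
      unfolding B'_def mv_diff Bv by (simp add: vec_eq_iff mv_outer vv)
    have hB': "herm B'" unfolding herm_def
    proof (intro allI)
      fix i j
      have "B$i$j = cnj (B$j$i)" using hB unfolding herm_def by blast
      then show "B'$i$j = cnj (B'$j$i)" unfolding B'_def outer_def by simp
    qed
    have qfB'v: "qf B' x v = 0" for x unfolding qf_mv_ip B'v by simp
    have qfB'v2: "qf B' v x = 0" for x using qf_herm[OF hB', of v x] qfB'v[of x] by simp
    have psdB': "psd B'" unfolding psd_iff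
    proof (intro conjI allI hB')
      fix x
      define a where "a = ip v x"
      define w where "w = x - a *s v"
      have xw: "x = w + a *s v" unfolding w_def by simp
      have "qf B' x x = qf B' w w"
        unfolding xw qf_add_left qf_add_right qf_smult_left qf_smult_right qfB'v qfB'v2 by simp
      also have "... = qf B w w - of_real lam * ip w v * ip v w"
        unfolding B'_def qf_diff qf_outer ..
      also have "ip v w = 0" unfolding w_def ip_diff_right ip_smult_right vv a_def by simp
      finally have "qf B' x x = qf B w w" by simp
      then show "0 \<le> Re (qf B' x x)" using posB by simp
    qed
    define K where "K = {x::complex^'n. B *v x = 0}"
    define K' where "K' = {x::complex^'n. B' *v x = 0}"
    have KK': "K \<subseteq> K'"
    proof
      fix x assume "x \<in> K"
      then have Bx: "B *v x = 0" unfolding K_def by simp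
      have "qf B v x = 0" unfolding qf_mv_ip Bx by simp
      moreover have "qf B v x = cnj (qf B x v)" by (rule qf_herm[OF hB])
      moreover have "qf B x v = of_real lam * ip x v" unfolding qf_mv_ip Bv ip_smult_right ..
      ultimately have "of_real lam * ip v x = 0" using ip_cnj[of v x] by simp
      then have "ip v x = 0" using lp by simp
      then show "x \<in> K'" unfolding K'_def B'_def mv_diff using Bx by (simp add: vec_eq_iff mv_outer)
    qed
    have vK': "v \<in> K'" unfolding K'_def using B'v by simp
    have vK: "v \<notin> K"
    proof
      assume "v \<in> K"
      then have "ip v (B *v v) = 0" unfolding K_def by simp
      then have "of_real lam * ip v v = 0" unfolding Bv ip_smult_right .
      then show False using vv lp by simp
    qed
    have subK: "subspace K" unfolding K_def by (rule kernel_subspace)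
    have "dim (insert v K) = dim K + 1"
      using vK subK by (metis dim_insert span_eq_iff)
    moreover have "dim (insert v K) \<le> dim K'" using KK' vK' by (intro dim_subset) auto
    moreover have "dim K' \<le> DIM(complex^'n)" by (rule dim_subset_UNIV)
    ultimately have lt: "DIM(complex^'n) - dim K' < DIM(complex^'n) - dim K" by linarith
    obtain r :: nat and g where gorth: "\<forall>k<r. \<forall>l<r. k \<noteq> l \<longrightarrow> ip (g k) (g l) = 0"
      and gB': "\<forall>i j. B'$i$j = (\<Sum>k<r. g k $ i * cnj (g k $ j))"
      using less.hyps[OF lt[unfolded K_def K'_def] psdB'] by blast
    have "qf B' v v = (\<Sum>k<r. ip v (g k) * ip (g k) v)" by (rule qf_decomp[OF gB'])
    also have "... = of_real (\<Sum>k<r. (cmod (ip v (g k)))\<^sup>2)"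
      by (simp add: of_real_sum complex_norm_square ip_cnj[of "g _" v] del: of_real_power)
    finally have e: "qf B' v v = of_real (\<Sum>k<r. (cmod (ip v (g k)))\<^sup>2)" .
    have "complex_of_real (\<Sum>k<r. (cmod (ip v (g k)))\<^sup>2) = 0" using e qfB'v[of v] by metis
    then have "(\<Sum>k<r. (cmod (ip v (g k)))\<^sup>2) = 0" by (simp only: of_real_eq_0_iff)
    then have vg: "ip v (g k) = 0" if "k < r" for k
      using that by (simp add: sum_nonneg_eq_0_iff)
    define g' where "g' k = (if k = 0 then of_real (sqrt lam) *s v else g (k - 1))" for k
    show ?thesis
    proof (intro exI[of _ "Suc r"] exI[of _ g'] conjI allI impI)
      fix k l assume k: "k < Suc r" and l: "l < Suc r" and kl: "k \<noteq> l"
      show "ip (g' k) (g' l) = 0"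
      proof (cases "k = 0")
        case True
        then have "l \<noteq> 0" using kl by simp
        then show ?thesis using True vg[of "l - 1"] l unfolding g'_def by (simp add: ip_smult_left)
      next
        case k0: False
        show ?thesis
        proof (cases "l = 0")
          case True
          have "ip (g (k - 1)) v = 0" using vg[of "k - 1"] k k0 ip_cnj[of "g (k-1)" v] by simp
          then show ?thesis using True k0 unfolding g'_def by (simp add: ip_smult_right)
        next
          case False
          then show ?thesis using k0 k l kl gorth unfolding g'_def by simp
        qed
      qed
    next
      fix i j
      have "(\<Sum>k<Suc r. g' k $ i * cnj (g' k $ j)) = g' 0 $ i * cnj (g' 0 $ j) + (\<Sum>k<r. g k $ i * cnj (g k $ j))"
        unfolding sum.lessThan_Suc_shift by (simp add: g'_def)
      also have "g' 0 $ i * cnj (g' 0 $ j) = of_real lam * v$i * cnj (v$j)"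
        using lp by (simp add: g'_def algebra_simps flip: of_real_mult)
      also have "(\<Sum>k<r. g k $ i * cnj (g k $ j)) = B'$i$j" using gB' by simp
      finally show "B$i$j = (\<Sum>k<Suc r. g' k $ i * cnj (g' k $ j))"
        unfolding B'_def outer_def by simp
    qed
  qed
qed

lemma qf_decomp_set:
  assumes "finite S" "\<forall>i j. M$i$j = (\<Sum>k\<in>S. g k $ i * cnj (g k $ j))"
  shows "qf M x y = (\<Sum>k\<in>S. ip x (g k) * ip (g k) y)"
proof -
  have "qf M x y = (\<Sum>i\<in>UNIV. \<Sum>j\<in>UNIV. \<Sum>k\<in>S. (cnj (x$i) * g k $ i) * (cnj (g k $ j) * y$j))"
    unfolding qf_def using assms by (simp add: sum_distrib_left sum_distrib_right algebra_simps)
  also have "... = (\<Sum>i\<in>UNIV. \<Sum>k\<in>S. \<Sum>j\<in>UNIV. (cnj (x$i) * g k $ i) * (cnj (g k $ j) * y$j))"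
    by (intro sum.cong refl) (rule sum.swap)
  also have "... = (\<Sum>k\<in>S. \<Sum>i\<in>UNIV. \<Sum>j\<in>UNIV. (cnj (x$i) * g k $ i) * (cnj (g k $ j) * y$j))"
    by (rule sum.swap)
  also have "... = (\<Sum>k\<in>S. ip x (g k) * ip (g k) y)"
    unfolding ip_def by (simp add: sum_product)
  finally show ?thesis .
qed

lemma decomp_psd:
  assumes "finite S" "\<forall>i j. M$i$j = (\<Sum>k\<in>S. g k $ i * cnj (g k $ j))"
  shows "psd M"
  unfolding psd_iff
proof (intro conjI allI)
  show "herm M" unfolding herm_def using assms(2) by (simp add: mult.commute)
  fix x
  have "qf M x x = (\<Sum>k\<in>S. ip x (g k) * ip (g k) x)" by (rule qf_decomp_set[OF assms])
  also have "... = of_real (\<Sum>k\<in>S. (cmod (ip (g k) x))\<^sup>2)"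
    by (simp add: of_real_sum complex_norm_square ip_cnj[of x "g _"] mult.commute del: of_real_power)
  finally show "0 \<le> Re (qf M x x)" by (simp add: sum_nonneg)
qed

lemma schur_psd:
  assumes "psd A"
  shows "psd (hadamard A (conj_mat A))"
proof -
  obtain r :: nat and h where hA: "\<forall>i j. A$i$j = (\<Sum>k<r. h k $ i * cnj (h k $ j))"
    using spectral[OF assms] by blast
  define G where "G = (\<lambda>pq. (\<chi> i. h (fst pq) $ i * cnj (h (snd pq) $ i)) :: complex^_)"
  show ?thesis
  proof (rule decomp_psd[of "{..<r} \<times> {..<r}" _ G])
    show "finite ({..<r} \<times> {..<r})" by simp
    show "\<forall>i j. hadamard A (conj_mat A) $ i $ j = (\<Sum>k\<in>{..<r} \<times> {..<r}. G k $ i * cnj (G k $ j))"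
    proof (intro allI)
      fix i j
      have "(\<Sum>k\<in>{..<r} \<times> {..<r}. G k $ i * cnj (G k $ j))
          = (\<Sum>p<r. \<Sum>q<r. (h p $ i * cnj (h p $ j)) * (cnj (h q $ i) * h q $ j))"
        unfolding G_def sum.cartesian_product split_def by (simp add: algebra_simps)
      also have "... = A$i$j * cnj (A$i$j)"
        using hA by (simp add: sum_product)
      finally show "hadamard A (conj_mat A) $ i $ j = (\<Sum>k\<in>{..<r} \<times> {..<r}. G k $ i * cnj (G k $ j))"
        unfolding hadamard_def conj_mat_def by simp
    qed
  qed
qed

definition zv :: "(nat \<Rightarrow> complex^'n) \<Rightarrow> nat \<Rightarrow> nat \<Rightarrow> complex^'n" where
  "zv g k l = (\<chi> i. cnj (g k $ i) * g l $ i)"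

lemma hadamard_decomp:
  assumes gB: "\<forall>i j. B$i$j = (\<Sum>k<r. g k $ i * cnj (g k $ j))"
  shows "(\<Sum>i\<in>UNIV. \<Sum>j\<in>UNIV. C$i$j * (B$i$j * cnj (B$i$j)))
       = (\<Sum>k<r. \<Sum>l<r. qf C (zv g k l) (zv g k l))"
proof -
  have "(\<Sum>i\<in>UNIV. \<Sum>j\<in>UNIV. C$i$j * (B$i$j * cnj (B$i$j)))
      = (\<Sum>i\<in>UNIV. \<Sum>j\<in>UNIV. \<Sum>l<r. \<Sum>k<r. g k $ i * cnj (g l $ i) * C$i$j * (cnj (g k $ j) * g l $ j))"
    using gB by (simp add: sum_product sum_distrib_left algebra_simps)
  also have "... = (\<Sum>i\<in>UNIV. \<Sum>j\<in>UNIV. \<Sum>k<r. \<Sum>l<r. g k $ i * cnj (g l $ i) * C$i$j * (cnj (g k $ j) * g l $ j))"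
    by (rule sum.cong[OF refl], rule sum.cong[OF refl], rule sum.swap)
  also have "... = (\<Sum>i\<in>UNIV. \<Sum>k<r. \<Sum>j\<in>UNIV. \<Sum>l<r. g k $ i * cnj (g l $ i) * C$i$j * (cnj (g k $ j) * g l $ j))"
    by (rule sum.cong[OF refl], rule sum.swap)
  also have "... = (\<Sum>k<r. \<Sum>i\<in>UNIV. \<Sum>j\<in>UNIV. \<Sum>l<r. g k $ i * cnj (g l $ i) * C$i$j * (cnj (g k $ j) * g l $ j))"
    by (rule sum.swap)
  also have "... = (\<Sum>k<r. \<Sum>i\<in>UNIV. \<Sum>l<r. \<Sum>j\<in>UNIV. g k $ i * cnj (g l $ i) * C$i$j * (cnj (g k $ j) * g l $ j))"
    by (rule sum.cong[OF refl], rule sum.cong[OF refl], rule sum.swap)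
  also have "... = (\<Sum>k<r. \<Sum>l<r. \<Sum>i\<in>UNIV. \<Sum>j\<in>UNIV. g k $ i * cnj (g l $ i) * C$i$j * (cnj (g k $ j) * g l $ j))"
    by (rule sum.cong[OF refl], rule sum.swap)
  also have "... = (\<Sum>k<r. \<Sum>l<r. qf C (zv g k l) (zv g k l))"
    unfolding qf_def zv_def by simp
  finally show ?thesis .
qed

definition onesm :: "complex^'n^'n" where "onesm = (\<chi> i j. 1)"

lemma qf_ones: "qf onesm z z = of_real ((cmod (\<Sum>i\<in>UNIV. z$i))\<^sup>2)"
proof -
  have "qf onesm z z = cnj (\<Sum>i\<in>UNIV. z$i) * (\<Sum>j\<in>UNIV. z$j)"
    unfolding qf_def onesm_def by (simp add: sum_product)
  then show ?thesis by (simp add: complex_norm_square mult.commute del: of_real_power)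
qed

lemma key_ineq:
  fixes C B :: "complex^'n^'n"
  assumes C: "psd C" and B: "psd B"
    and H: "\<And>w. (\<forall>i. w$i = of_real (Re (w$i)) \<and> 0 \<le> Re (w$i)) \<Longrightarrow> mu * (\<Sum>i\<in>UNIV. Re (w$i))\<^sup>2 \<le> Re (qf C w w)"
  shows "mu * (\<Sum>i\<in>UNIV. \<Sum>j\<in>UNIV. (cmod (B$i$j))\<^sup>2) \<le> Re (\<Sum>i\<in>UNIV. \<Sum>j\<in>UNIV. C$i$j * (B$i$j * cnj (B$i$j)))"
proof -
  obtain r :: nat and g where gorth: "\<forall>k<r. \<forall>l<r. k \<noteq> l \<longrightarrow> ip (g k) (g l) = 0"
      and gB: "\<forall>i j. B$i$j = (\<Sum>k<r. g k $ i * cnj (g k $ j))"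
    using spectral[OF B] by blast
  define nk where "nk k = (\<Sum>i\<in>UNIV. (cmod (g k $ i))\<^sup>2)" for k
  have zkk: "zv g k k $ i = of_real ((cmod (g k $ i))\<^sup>2)" for k i
    unfolding zv_def by (simp add: complex_norm_square mult.commute del: of_real_power)
  have sumz: "(\<Sum>i\<in>UNIV. zv g k l $ i) = ip (g k) (g l)" for k l
    unfolding zv_def ip_def by simp
  have posC: "\<And>x. 0 \<le> Re (qf C x x)" using C psd_iff by auto
  have "(\<Sum>i\<in>UNIV. \<Sum>j\<in>UNIV. (cmod (B$i$j))\<^sup>2) = Re (\<Sum>i\<in>UNIV. \<Sum>j\<in>UNIV. onesm$i$j * (B$i$j * cnj (B$i$j)))"
    by (simp add: onesm_def complex_norm_square[symmetric] del: of_real_power)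
  also have "... = (\<Sum>k<r. \<Sum>l<r. Re (qf onesm (zv g k l) (zv g k l)))"
    unfolding hadamard_decomp[OF gB] by simp
  also have "... = (\<Sum>k<r. (nk k)\<^sup>2)"
  proof (intro sum.cong refl)
    fix k assume k: "k \<in> {..<r}"
    have "(\<Sum>l<r. Re (qf onesm (zv g k l) (zv g k l))) = (\<Sum>l<r. if l = k then (nk k)\<^sup>2 else 0)"
    proof (intro sum.cong refl)
      fix l assume l: "l \<in> {..<r}"
      show "Re (qf onesm (zv g k l) (zv g k l)) = (if l = k then (nk k)\<^sup>2 else 0)"
      proof (cases "l = k")
        case True
        have "(\<Sum>i\<in>UNIV. zv g k k $ i) = of_real (nk k)"
          unfolding zkk nk_def of_real_sum ..
        moreover have "nk k \<ge> 0" unfolding nk_def by (simp add: sum_nonneg)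
        ultimately show ?thesis using True unfolding qf_ones by simp
      next
        case False
        then show ?thesis using gorth k l unfolding qf_ones sumz by simp
      qed
    qed
    also have "... = (nk k)\<^sup>2" using k by simp
    finally show "(\<Sum>l<r. Re (qf onesm (zv g k l) (zv g k l))) = (nk k)\<^sup>2" .
  qed
  finally have frob: "(\<Sum>i\<in>UNIV. \<Sum>j\<in>UNIV. (cmod (B$i$j))\<^sup>2) = (\<Sum>k<r. (nk k)\<^sup>2)" .
  have "mu * (\<Sum>k<r. (nk k)\<^sup>2) = (\<Sum>k<r. mu * (nk k)\<^sup>2)" by (simp add: sum_distrib_left)
  also have "... \<le> (\<Sum>k<r. \<Sum>l<r. Re (qf C (zv g k l) (zv g k l)))"
  proof (rule sum_mono)
    fix k assume k: "k \<in> {..<r}"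
    have "mu * (nk k)\<^sup>2 \<le> Re (qf C (zv g k k) (zv g k k))"
    proof -
      have "mu * (\<Sum>i\<in>UNIV. Re (zv g k k $ i))\<^sup>2 \<le> Re (qf C (zv g k k) (zv g k k))"
        by (rule H) (simp add: zkk)
      then show ?thesis by (simp add: zkk nk_def)
    qed
    also have "... \<le> (\<Sum>l<r. Re (qf C (zv g k l) (zv g k l)))"
      by (rule member_le_sum[of k "{..<r}" "\<lambda>l. Re (qf C (zv g k l) (zv g k l))"]) (use k posC in auto)
    finally show "mu * (nk k)\<^sup>2 \<le> (\<Sum>l<r. Re (qf C (zv g k l) (zv g k l)))" .
  qed
  also have "... = Re (\<Sum>i\<in>UNIV. \<Sum>j\<in>UNIV. C$i$j * (B$i$j * cnj (B$i$j)))"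
    unfolding hadamard_decomp[OF gB] by simp
  finally show ?thesis unfolding frob .
qed

definition cm :: "complex^'n^'n \<Rightarrow> 'n \<Rightarrow> 'n \<Rightarrow> real" where
  "cm A i j = (cmod (A$i$j))\<^sup>2"

definition diagm :: "('n \<Rightarrow> real) \<Rightarrow> complex^'n^'n" where
  "diagm e = (\<chi> i j. if i = j then complex_of_real (e i) else 0)"

definition mkD :: "('n \<Rightarrow> real) \<Rightarrow> complex^'n^'n" where
  "mkD e = (\<chi> i j. if i = j then complex_of_real (sqrt (e i)) else 0)"

definition Sd :: "complex^'n^'n \<Rightarrow> real" where
  "Sd D = (\<Sum>i\<in>UNIV. 1 / (Re (D$i$i))\<^sup>2)"

lemma hadC: "hadamard A (conj_mat A) $ i $ j = complex_of_real (cm A i j)"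
  unfolding hadamard_def conj_mat_def cm_def by (simp add: complex_norm_square del: of_real_power)

lemma cm_nonneg: "cm A i j \<ge> 0" unfolding cm_def by simp

lemma cm_sym: "herm A \<Longrightarrow> cm A i j = cm A j i"
  unfolding herm_def cm_def by (metis complex_mod_cnj)

lemma qf_diagm: "qf (diagm e) x x = complex_of_real (\<Sum>i\<in>UNIV. e i * (cmod (x$i))\<^sup>2)"
proof -
  have "qf (diagm e) x x = (\<Sum>i\<in>UNIV. \<Sum>j\<in>UNIV. if i = j then cnj (x$i) * of_real (e i) * x$j else 0)"
    unfolding qf_def diagm_def by (intro sum.cong refl) auto
  also have "... = (\<Sum>i\<in>UNIV. of_real (e i) * (cnj (x$i) * x$i))" by (simp add: algebra_simps)
  also have "... = complex_of_real (\<Sum>i\<in>UNIV. e i * (cmod (x$i))\<^sup>2)"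
    by (simp add: of_real_sum complex_norm_square mult.commute del: of_real_power)
  finally show ?thesis .
qed

lemma qf_C_le: "Re (qf (hadamard A (conj_mat A)) x x) \<le> (\<Sum>i\<in>UNIV. \<Sum>j\<in>UNIV. cm A i j * (cmod (x$i) * cmod (x$j)))"
proof -
  have "Re (qf (hadamard A (conj_mat A)) x x) = (\<Sum>i\<in>UNIV. \<Sum>j\<in>UNIV. cm A i j * Re (cnj (x$i) * x$j))"
    unfolding qf_def hadC by (simp add: algebra_simps)
  also have "... \<le> (\<Sum>i\<in>UNIV. \<Sum>j\<in>UNIV. cm A i j * (cmod (x$i) * cmod (x$j)))"
  proof (intro sum_mono mult_left_mono cm_nonneg)
    fix i j
    have "Re (cnj (x$i) * x$j) \<le> cmod (cnj (x$i) * x$j)" by (rule complex_Re_le_cmod)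
    then show "Re (cnj (x$i) * x$j) \<le> cmod (x$i) * cmod (x$j)" by (simp add: norm_mult)
  qed
  finally show ?thesis .
qed

lemma herm_diff: assumes "herm M" "herm N" shows "herm (M - N)"
  unfolding herm_def
proof (intro allI)
  fix i j
  have "M$i$j = cnj (M$j$i)" "N$i$j = cnj (N$j$i)" using assms unfolding herm_def by blast+
  then show "(M - N)$i$j = cnj ((M - N)$j$i)" by simp
qed

lemma herm_diagm: "herm (diagm e)" unfolding herm_def diagm_def by simp

lemma amgm_u:
  fixes a b ui uj :: real
  assumes "ui > 0" "uj > 0"
  shows "2 * (a * b) \<le> uj / ui * a\<^sup>2 + ui / uj * b\<^sup>2"
proof -
  have "0 \<le> (uj * a - ui * b)\<^sup>2" by simp
  then have "2 * (ui * uj) * (a * b) \<le> uj\<^sup>2 * a\<^sup>2 + ui\<^sup>2 * b\<^sup>2" by (simp add: power2_eq_square algebra_simps)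
  then have "2 * (a * b) \<le> (uj\<^sup>2 * a\<^sup>2 + ui\<^sup>2 * b\<^sup>2) / (ui * uj)"
    using assms by (simp add: field_simps)
  also have "... = uj / ui * a\<^sup>2 + ui / uj * b\<^sup>2" using assms by (simp add: field_simps power2_eq_square)
  finally show ?thesis .
qed

lemma schur_test:
  fixes A :: "complex^'n^'n"
  assumes A: "psd A" and u: "\<And>i. u i > 0" and e: "\<And>i. e i \<ge> (\<Sum>j\<in>UNIV. cm A i j * u j) / u i"
  shows "loewner_le (hadamard A (conj_mat A)) (diagm e)"
  unfolding loewner_le_def psd_iff
proof (intro conjI allI)
  have hC: "herm (hadamard A (conj_mat A))" using schur_psd[OF A] psd_iff by auto
  show "herm (diagm e - hadamard A (conj_mat A))" by (rule herm_diff[OF herm_diagm hC])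
  have hA: "herm A" using A psd_iff by auto
  fix x :: "complex^'n"
  define a where "a i = cmod (x$i)" for i
  have "2 * (\<Sum>i\<in>UNIV. \<Sum>j\<in>UNIV. cm A i j * (a i * a j))
      = (\<Sum>i\<in>UNIV. \<Sum>j\<in>UNIV. cm A i j * (2 * (a i * a j)))"
    by (simp add: sum_distrib_left algebra_simps)
  also have "... \<le> (\<Sum>i\<in>UNIV. \<Sum>j\<in>UNIV. cm A i j * (u j / u i * (a i)\<^sup>2 + u i / u j * (a j)\<^sup>2))"
    by (intro sum_mono mult_left_mono cm_nonneg amgm_u u)
  also have "... = (\<Sum>i\<in>UNIV. \<Sum>j\<in>UNIV. cm A i j * (u j / u i * (a i)\<^sup>2)) + (\<Sum>i\<in>UNIV. \<Sum>j\<in>UNIV. cm A i j * (u i / u j * (a j)\<^sup>2))"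
    by (simp add: sum.distrib algebra_simps)
  also have "(\<Sum>i\<in>UNIV. \<Sum>j\<in>UNIV. cm A i j * (u i / u j * (a j)\<^sup>2)) = (\<Sum>j\<in>UNIV. \<Sum>i\<in>UNIV. cm A i j * (u i / u j * (a j)\<^sup>2))"
    by (rule sum.swap)
  also have "... = (\<Sum>i\<in>UNIV. \<Sum>j\<in>UNIV. cm A i j * (u j / u i * (a i)\<^sup>2))"
    using cm_sym[OF hA] by simp
  also have "(\<Sum>i\<in>UNIV. \<Sum>j\<in>UNIV. cm A i j * (u j / u i * (a i)\<^sup>2)) = (\<Sum>i\<in>UNIV. (a i)\<^sup>2 * ((\<Sum>j\<in>UNIV. cm A i j * u j) / u i))"
    by (simp add: sum_distrib_left sum_divide_distrib algebra_simps)
  also have "... \<le> (\<Sum>i\<in>UNIV. (a i)\<^sup>2 * e i)"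
    by (intro sum_mono mult_left_mono e) simp
  finally have "(\<Sum>i\<in>UNIV. \<Sum>j\<in>UNIV. cm A i j * (a i * a j)) \<le> (\<Sum>i\<in>UNIV. e i * (cmod (x$i))\<^sup>2)"
    by (simp add: a_def mult.commute)
  then have "Re (qf (hadamard A (conj_mat A)) x x) \<le> Re (qf (diagm e) x x)"
    using qf_C_le[of A x] unfolding qf_diagm a_def by simp
  then show "0 \<le> Re (qf (diagm e - hadamard A (conj_mat A)) x x)"
    unfolding qf_diff by simp
qed

lemma mkD_props:
  assumes "\<And>i. e i > 0"
  shows "pos_diag (mkD e)" "mkD e ** mkD e = diagm e" "Re (mkD e $ i $ i) = sqrt (e i)"
proof -
  show "pos_diag (mkD e)" unfolding pos_diag_def mkD_def using assms by simp
  show "Re (mkD e $ i $ i) = sqrt (e i)" unfolding mkD_def by simp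
  have "(mkD e ** mkD e) $ i $ j = diagm e $ i $ j" for i j
  proof -
    have "(mkD e ** mkD e) $ i $ j = (\<Sum>k\<in>UNIV. if k = i then (if i = j then complex_of_real (e i) else 0) else 0)"
      unfolding matrix_matrix_mult_def mkD_def vec_lambda_beta using assms
      by (intro sum.cong refl) (auto simp: abs_of_pos simp flip: of_real_mult)
    also have "... = diagm e $ i $ j" unfolding diagm_def by simp
    finally show ?thesis .
  qed
  then show "mkD e ** mkD e = diagm e" by (simp add: vec_eq_iff)
qed

lemma frob_sq: "(frob M)\<^sup>2 = (\<Sum>i\<in>UNIV. \<Sum>j\<in>UNIV. (cmod (M$i$j))\<^sup>2)"
proof -
  have "0 \<le> (\<Sum>i\<in>UNIV. \<Sum>j\<in>UNIV. (cmod (M$i$j))\<^sup>2)" by (intro sum_nonneg) simp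
  then show ?thesis unfolding frob_def by (rule real_sqrt_pow2)
qed

lemma frob_nonneg: "frob M \<ge> 0" unfolding frob_def by (meson sum_nonneg zero_le_power2 real_sqrt_ge_zero)

lemma pos_diag_sq:
  assumes "pos_diag D"
  shows "D ** D = diagm (\<lambda>i. (Re (D$i$i))\<^sup>2)" "D$i$i = complex_of_real (Re (D$i$i))" "Re (D$i$i) > 0"
proof -
  have off: "\<And>i j. i \<noteq> j \<Longrightarrow> D$i$j = 0" and dg: "\<And>i. Im (D$i$i) = 0 \<and> Re (D$i$i) > 0"
    using assms unfolding pos_diag_def by auto
  show dd: "D$i$i = complex_of_real (Re (D$i$i))" for i using dg[of i] by (simp add: complex_eq_iff)
  show "Re (D$i$i) > 0" using dg by blast
  have "(D ** D) $ i $ j = diagm (\<lambda>i. (Re (D$i$i))\<^sup>2) $ i $ j" for i j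
  proof -
    have "(D ** D) $ i $ j = (\<Sum>k\<in>UNIV. if k = i then D$i$k * D$k$j else 0)"
      unfolding matrix_matrix_mult_def vec_lambda_beta by (intro sum.cong refl) (auto simp: off)
    also have "... = D$i$i * D$i$j" by simp
    also have "... = diagm (\<lambda>i. (Re (D$i$i))\<^sup>2) $ i $ j"
      unfolding diagm_def using dd[of i] off[of i j]
      by (cases "i = j") (simp_all, metis of_real_mult power2_eq_square)
    finally show ?thesis .
  qed
  then show "D ** D = diagm (\<lambda>i. (Re (D$i$i))\<^sup>2)" by (simp add: vec_eq_iff)
qed

lemma Sd_pos: assumes "pos_diag D" shows "Sd D > 0"
  unfolding Sd_def
proof (rule sum_pos)
  fix i show "0 < 1 / (Re (D$i$i))\<^sup>2" using pos_diag_sq(3)[OF assms, of i] by simp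
qed auto

lemma upper_bound:
  fixes A D :: "complex^'n^'n"
  assumes A: "psd A" and D: "pos_diag D" and L: "loewner_le (hadamard A (conj_mat A)) (D ** D)"
  shows "I2 A \<le> Sd D powr (-1/2)"
proof -
  define d where "d i = Re (D$i$i)" for i
  define S where "S = Sd D"
  have dp: "d i > 0" for i using pos_diag_sq(3)[OF D] d_def by simp
  have Sp: "S > 0" using Sd_pos[OF D] S_def by simp
  have Sdef: "S = (\<Sum>i\<in>UNIV. 1 / (d i)\<^sup>2)" unfolding S_def Sd_def d_def ..
  define v where "v i = 1 / (d i * sqrt S)" for i
  define g :: "nat \<Rightarrow> complex^'n" where "g = (\<lambda>k. (\<chi> i. complex_of_real (v i)))"
  define B :: "complex^'n^'n" where "B = (\<chi> i j. complex_of_real (v i * v j))"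
  have psdB: "psd B"
    by (rule decomp_psd[of "{0::nat}" _ g]) (simp_all add: B_def g_def)
  have v2: "(v i)\<^sup>2 = 1 / ((d i)\<^sup>2 * S)" for i
    unfolding v_def using Sp by (simp add: power2_eq_square field_simps)
  have sumv2: "(\<Sum>i\<in>UNIV. (v i)\<^sup>2) = 1"
  proof -
    have "(\<Sum>i\<in>UNIV. 1 / ((d i)\<^sup>2 * S)) = (\<Sum>i\<in>UNIV. 1 / (d i)\<^sup>2) / S"
      by (simp add: sum_divide_distrib divide_divide_eq_left)
    then show ?thesis unfolding v2 Sdef[symmetric] using Sp by simp
  qed
  have "(frob B)\<^sup>2 = (\<Sum>i\<in>UNIV. \<Sum>j\<in>UNIV. (v i)\<^sup>2 * (v j)\<^sup>2)"
    unfolding frob_sq B_def by (simp add: norm_mult power_mult_distrib del: of_real_mult)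
  also have "... = 1" by (simp add: sum_product[symmetric] sumv2)
  finally have "(frob B)\<^sup>2 = 1" .
  then have fB: "frob B = 1" using frob_nonneg[of B] by (simp add: power2_eq_1_iff)
  define w :: "complex^'n" where "w = (\<chi> i. complex_of_real ((v i)\<^sup>2))"
  have "0 \<le> Re (qf (D ** D - hadamard A (conj_mat A)) w w)"
    using L unfolding loewner_le_def psd_iff by blast
  then have "Re (qf (hadamard A (conj_mat A)) w w) \<le> Re (qf (D ** D) w w)"
    unfolding qf_diff by simp
  also have "Re (qf (D ** D) w w) = (\<Sum>i\<in>UNIV. (d i)\<^sup>2 * ((v i)\<^sup>2)\<^sup>2)"
    unfolding pos_diag_sq(1)[OF D] qf_diagm d_def w_def by (simp add: norm_power)
  also have "... = (\<Sum>i\<in>UNIV. 1 / (d i)\<^sup>2) / S\<^sup>2"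
  proof -
    have "(\<Sum>i\<in>UNIV. (d i)\<^sup>2 * ((v i)\<^sup>2)\<^sup>2) = (\<Sum>i\<in>UNIV. 1 / (d i)\<^sup>2 / S\<^sup>2)"
    proof (intro sum.cong refl)
      fix i
      have "d i \<noteq> 0" using dp[of i] by simp
      then show "(d i)\<^sup>2 * ((v i)\<^sup>2)\<^sup>2 = 1 / (d i)\<^sup>2 / S\<^sup>2"
        unfolding v2 using Sp by (simp add: field_simps power2_eq_square)
    qed
    then show ?thesis by (simp add: sum_divide_distrib)
  qed
  also have "... = 1 / S" unfolding Sdef[symmetric] using Sp by (simp add: power2_eq_square)
  finally have le1: "Re (qf (hadamard A (conj_mat A)) w w) \<le> 1 / S" .
  have "(frob (hadamard A B))\<^sup>2 = Re (qf (hadamard A (conj_mat A)) w w)"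
    unfolding frob_sq qf_def hadC unfolding w_def B_def hadamard_def cm_def
    by (simp add: norm_mult power_mult_distrib algebra_simps)
  with le1 have "(frob (hadamard A B))\<^sup>2 \<le> 1 / S" by simp
  then have "frob (hadamard A B) \<le> sqrt (1 / S)" using frob_nonneg by (simp add: real_le_rsqrt)
  also have "sqrt (1 / S) = S powr (-1/2)"
    using Sp by (simp add: powr_minus_divide powr_half_sqrt[symmetric] real_sqrt_divide)
  finally have le2: "frob (hadamard A B) \<le> Sd D powr (-1/2)" unfolding S_def .
  have "I2 A \<le> frob (hadamard A B)"
    unfolding I2_def
  proof (rule cInf_lower)
    show "frob (hadamard A B) \<in> {frob (hadamard A B) |B. psd B \<and> frob B = 1}" using psdB fB by blast
    show "bdd_below {frob (hadamard A B) |B. psd B \<and> frob B = 1}"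
      by (rule bdd_belowI[of _ 0]) (auto simp: frob_nonneg)
  qed
  then show ?thesis using le2 by simp
qed

lemma exists_D:
  fixes A :: "complex^'n^'n" and w :: "'n \<Rightarrow> real"
  assumes A: "psd A" and w: "\<And>i. w i \<ge> 0" and s: "(\<Sum>i\<in>UNIV. w i) > 0" and ep: "ep > 0"
  shows "\<exists>D. pos_diag D \<and> loewner_le (hadamard A (conj_mat A)) (D ** D) \<and>
    1 / Sd D \<le> (\<Sum>i\<in>UNIV. \<Sum>j\<in>UNIV. cm A i j * w i * w j) / (\<Sum>i\<in>UNIV. w i)\<^sup>2 + ep"
proof -
  define N where "N t = (\<Sum>i\<in>UNIV. \<Sum>j\<in>UNIV. cm A i j * (w i + t) * (w j + t)) + t * (\<Sum>i\<in>UNIV. (w i + t)\<^sup>2)" for t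
  define F where "F t = N t / (\<Sum>i\<in>UNIV. (w i + t))\<^sup>2" for t
  have "((\<lambda>t. F t) \<longlongrightarrow> F 0) (at_right 0)"
    unfolding F_def N_def using s by (intro tendsto_intros) auto
  then have ev: "eventually (\<lambda>t. F t < F 0 + ep) (at_right 0)"
    using ep by (intro order_tendstoD(2)) auto
  then obtain b where b: "b > 0" and hb: "\<And>t. t > 0 \<Longrightarrow> t < b \<Longrightarrow> F t < F 0 + ep"
    unfolding eventually_at_right_field by auto
  define t where "t = b / 2"
  have t: "t > 0" "t < b" using b unfolding t_def by auto
  have F0: "F 0 = (\<Sum>i\<in>UNIV. \<Sum>j\<in>UNIV. cm A i j * w i * w j) / (\<Sum>i\<in>UNIV. w i)\<^sup>2"
    unfolding F_def N_def by simp
  define u where "u i = w i + t" for i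
  have up: "u i > 0" for i using w[of i] t unfolding u_def by simp
  define e where "e i = (\<Sum>j\<in>UNIV. cm A i j * u j) / u i + t" for i
  have e_ge: "e i \<ge> (\<Sum>j\<in>UNIV. cm A i j * u j) / u i" for i unfolding e_def using t by simp
  have ep0: "e i > 0" for i
  proof -
    have "(\<Sum>j\<in>UNIV. cm A i j * u j) \<ge> 0" by (intro sum_nonneg mult_nonneg_nonneg cm_nonneg less_imp_le up)
    then have "(\<Sum>j\<in>UNIV. cm A i j * u j) / u i \<ge> 0" using up[of i] by simp
    then show ?thesis unfolding e_def using t by simp
  qed
  define D where "D = mkD e"
  have pD: "pos_diag D" unfolding D_def by (rule mkD_props(1)[OF ep0])
  have DD: "D ** D = diagm e" unfolding D_def by (rule mkD_props(2)[OF ep0])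
  have L: "loewner_le (hadamard A (conj_mat A)) (D ** D)"
    unfolding DD by (rule schur_test[OF A up e_ge])
  have SdD: "Sd D = (\<Sum>i\<in>UNIV. 1 / e i)"
    unfolding Sd_def D_def mkD_props(3)[OF ep0] using ep0 by (simp add: less_imp_le)
  have Sp: "Sd D > 0" by (rule Sd_pos[OF pD])
  have sump: "(\<Sum>i\<in>UNIV. u i) > 0" using up by (simp add: sum_pos)
  have "(\<Sum>i\<in>UNIV. (1 / sqrt (e i)) * (u i * sqrt (e i))) = (\<Sum>i\<in>UNIV. u i)"
  proof (intro sum.cong refl)
    fix i have "sqrt (e i) \<noteq> 0" using ep0[of i] by simp
    then show "(1 / sqrt (e i)) * (u i * sqrt (e i)) = u i" by simp
  qed
  then have "(\<Sum>i\<in>UNIV. u i)\<^sup>2 = (\<Sum>i\<in>UNIV. (1 / sqrt (e i)) * (u i * sqrt (e i)))\<^sup>2"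
    by simp
  also have "... \<le> (\<Sum>i\<in>UNIV. (1 / sqrt (e i))\<^sup>2) * (\<Sum>i\<in>UNIV. (u i * sqrt (e i))\<^sup>2)"
    by (rule Cauchy_Schwarz_ineq_sum)
  also have "(\<Sum>i\<in>UNIV. (1 / sqrt (e i))\<^sup>2) = Sd D"
    unfolding SdD using ep0 by (simp add: power_divide less_imp_le)
  also have "(\<Sum>i\<in>UNIV. (u i * sqrt (e i))\<^sup>2) = (\<Sum>i\<in>UNIV. u i * (\<Sum>j\<in>UNIV. cm A i j * u j) + t * (u i)\<^sup>2)"
  proof (intro sum.cong refl)
    fix i
    have "(u i * sqrt (e i))\<^sup>2 = (u i)\<^sup>2 * e i" using ep0[of i] by (simp add: power_mult_distrib less_imp_le)
    also have "... = u i * (\<Sum>j\<in>UNIV. cm A i j * u j) + t * (u i)\<^sup>2"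
      unfolding e_def using up[of i] by (simp add: field_simps power2_eq_square)
    finally show "(u i * sqrt (e i))\<^sup>2 = u i * (\<Sum>j\<in>UNIV. cm A i j * u j) + t * (u i)\<^sup>2" .
  qed
  also have "... = N t"
    unfolding N_def u_def by (simp add: sum.distrib sum_distrib_left sum_distrib_right algebra_simps)
  finally have cs: "(\<Sum>i\<in>UNIV. u i)\<^sup>2 \<le> Sd D * N t" .
  have "1 / Sd D \<le> N t / (\<Sum>i\<in>UNIV. u i)\<^sup>2"
    using cs Sp sump by (simp add: field_simps)
  also have "... = F t" unfolding F_def u_def ..
  also have "... < F 0 + ep" using hb t by simp
  finally show ?thesis using pD L unfolding F0 by (intro exI[of _ D]) simp
qed

lemma qf_axis: "qf M (axis i 1) (axis i 1) = M$i$i"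
proof -
  have "qf M (axis i 1) (axis i 1) = (\<Sum>k\<in>UNIV. if k = i then M$k$i else 0)"
    unfolding qf_mv mv_axis by (intro sum.cong refl) (simp add: axis_def)
  then show ?thesis by simp
qed

lemma loewner_refl: "loewner_le M M"
  unfolding loewner_le_def psd_iff herm_def qf_def by simp

lemma pos_diag_diagm: "pos_diag D \<Longrightarrow> D = diagm (\<lambda>i. Re (D$i$i))"
  using pos_diag_sq(2)[of D] unfolding pos_diag_def diagm_def
  by (simp add: vec_eq_iff)

lemma psd_diagm: assumes "\<And>i. e i \<ge> 0" shows "psd (diagm e)"
  unfolding psd_iff qf_diagm using assms herm_diagm
  by (auto intro!: sum_nonneg)

lemma I2_lower:
  fixes A :: "complex^'n^'n"
  assumes A: "psd A" and T: "T = {Sd D powr (-1/2) | D. pos_diag D \<and> loewner_le (hadamard A (conj_mat A)) (D ** D)}"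
    and Tne: "T \<noteq> {}" and B: "psd B" "frob B = 1"
  shows "Inf T \<le> frob (hadamard A B)"
proof -
  define C where "C = hadamard A (conj_mat A)"
  define t0 where "t0 = Inf T"
  have Tnn: "\<And>x. x \<in> T \<Longrightarrow> 0 \<le> x" unfolding T by auto
  have bddT: "bdd_below T" using Tnn by (intro bdd_belowI[of _ 0]) auto
  have t0nn: "0 \<le> t0" unfolding t0_def using Tne Tnn by (intro cInf_greatest) auto
  have psdC: "psd C" unfolding C_def by (rule schur_psd[OF A])
  have H: "t0\<^sup>2 * (\<Sum>i\<in>UNIV. Re (w$i))\<^sup>2 \<le> Re (qf C w w)"
    if wr: "\<forall>i. w$i = of_real (Re (w$i)) \<and> 0 \<le> Re (w$i)" for w
  proof -
    define r where "r i = Re (w$i)" for i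
    have wr': "w$i = of_real (r i)" "r i \<ge> 0" for i using wr unfolding r_def by blast+
    have qC: "Re (qf C w w) = (\<Sum>i\<in>UNIV. \<Sum>j\<in>UNIV. cm A i j * r i * r j)"
      unfolding qf_def C_def hadC wr'(1) by (simp add: mult_ac)
    show ?thesis
    proof (cases "(\<Sum>i\<in>UNIV. r i) = 0")
      case True
      then show ?thesis using psdC unfolding psd_iff r_def by simp
    next
      case False
      then have s: "(\<Sum>i\<in>UNIV. r i) > 0" using wr'(2) by (simp add: sum_nonneg order_le_neq_trans)
      have "t0\<^sup>2 \<le> (\<Sum>i\<in>UNIV. \<Sum>j\<in>UNIV. cm A i j * r i * r j) / (\<Sum>i\<in>UNIV. r i)\<^sup>2"
      proof (rule field_le_epsilon)
        fix ep :: real assume ep: "ep > 0"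
        obtain D where D: "pos_diag D" "loewner_le (hadamard A (conj_mat A)) (D ** D)"
          and le: "1 / Sd D \<le> (\<Sum>i\<in>UNIV. \<Sum>j\<in>UNIV. cm A i j * r i * r j) / (\<Sum>i\<in>UNIV. r i)\<^sup>2 + ep"
          using exists_D[OF A wr'(2) s ep] by blast
        have "t0 \<le> Sd D powr (-1/2)" unfolding t0_def
          by (rule cInf_lower[OF _ bddT]) (use D T in blast)
        then have "t0\<^sup>2 \<le> (Sd D powr (-1/2))\<^sup>2" using t0nn by (simp add: power_mono)
        also have "(Sd D powr (-1/2))\<^sup>2 = 1 / Sd D"
        proof -
          have "(Sd D powr (-1/2))\<^sup>2 = Sd D powr (-1/2) * Sd D powr (-1/2)" by (rule power2_eq_square)
          also have "... = Sd D powr (-1/2 + -1/2)" by (rule powr_add[symmetric])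
          also have "... = 1 / Sd D" using Sd_pos[OF D(1)] by (simp add: powr_minus_divide)
          finally show ?thesis .
        qed
        finally show "t0\<^sup>2 \<le> (\<Sum>i\<in>UNIV. \<Sum>j\<in>UNIV. cm A i j * r i * r j) / (\<Sum>i\<in>UNIV. r i)\<^sup>2 + ep"
          using le by simp
      qed
      then show ?thesis unfolding qC r_def[symmetric] using s by (simp add: field_simps)
    qed
  qed
  have "t0\<^sup>2 * (\<Sum>i\<in>UNIV. \<Sum>j\<in>UNIV. (cmod (B$i$j))\<^sup>2) \<le> Re (\<Sum>i\<in>UNIV. \<Sum>j\<in>UNIV. C$i$j * (B$i$j * cnj (B$i$j)))"
    by (rule key_ineq[OF psdC B(1)]) (rule H, blast)
  also have "Re (\<Sum>i\<in>UNIV. \<Sum>j\<in>UNIV. C$i$j * (B$i$j * cnj (B$i$j))) = (frob (hadamard A B))\<^sup>2"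
    unfolding frob_sq C_def hadC unfolding hadamard_def cm_def
    by (simp add: norm_mult power_mult_distrib flip: complex_norm_square)
  finally have "t0\<^sup>2 \<le> (frob (hadamard A B))\<^sup>2" using B(2) unfolding frob_sq[symmetric] by simp
  then show ?thesis unfolding t0_def[symmetric] using frob_nonneg by (rule power2_le_imp_le)
qed

lemma I2_main:
  fixes A :: "complex^'n^'n"
  assumes A: "psd A"
  shows "I2 A = Inf {Sd D powr (-1/2) | D. pos_diag D \<and> loewner_le (hadamard A (conj_mat A)) (D ** D)}"
proof -
  define T where "T = {Sd D powr (-1/2) | D. pos_diag D \<and> loewner_le (hadamard A (conj_mat A)) (D ** D)}"
  have "(\<Sum>i\<in>(UNIV::'n set). (1::real)) > 0" by simp
  then obtain D0 where D0: "pos_diag D0" "loewner_le (hadamard A (conj_mat A)) (D0 ** D0)"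
    using exists_D[OF A, of "\<lambda>i. 1" 1] by auto
  have Tne: "T \<noteq> {}" unfolding T_def using D0 by blast
  define Bs where "Bs = {frob (hadamard A B) |B. psd B \<and> frob B = 1}"
  define k0 :: 'n where "k0 = undefined"
  define B0 :: "complex^'n^'n" where "B0 = (\<chi> i j. if i = k0 \<and> j = k0 then 1 else 0)"
  have psdB0: "psd B0"
    by (rule decomp_psd[of "{0::nat}" _ "\<lambda>k. axis k0 1"]) (simp_all add: B0_def axis_def)
  have "(frob B0)\<^sup>2 = 1"
  proof -
    have "(frob B0)\<^sup>2 = (\<Sum>i\<in>UNIV. \<Sum>j\<in>UNIV. if i = k0 \<and> j = k0 then 1 else 0)"
      unfolding frob_sq B0_def by (intro sum.cong refl) auto
    also have "... = (\<Sum>i\<in>UNIV. if i = k0 then 1 else 0)"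
      by (intro sum.cong refl) auto
    also have "... = 1" by simp
    finally show ?thesis .
  qed
  then have fB0: "frob B0 = 1" using frob_nonneg[of B0] by (simp add: power2_eq_1_iff)
  have Bsne: "Bs \<noteq> {}" unfolding Bs_def using psdB0 fB0 by blast
  have le1: "I2 A \<le> Inf T"
  proof (rule cInf_greatest[OF Tne])
    fix x assume "x \<in> T"
    then obtain D where "x = Sd D powr (-1/2)" "pos_diag D" "loewner_le (hadamard A (conj_mat A)) (D ** D)"
      unfolding T_def by blast
    then show "I2 A \<le> x" using upper_bound[OF A] by blast
  qed
  have le2: "Inf T \<le> I2 A"
    unfolding I2_def Bs_def[symmetric]
  proof (rule cInf_greatest[OF Bsne])
    fix x assume "x \<in> Bs"
    then obtain B where "x = frob (hadamard A B)" "psd B" "frob B = 1"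
      unfolding Bs_def by blast
    then show "Inf T \<le> x" using I2_lower[OF A T_def Tne] by blast
  qed
  show ?thesis using le1 le2 unfolding T_def by simp
qed

lemma I2_diag:
  fixes D :: "complex^'n^'n"
  assumes D: "pos_diag D"
  shows "I2 D = Sd D powr (-1/2)"
proof -
  define d where "d = (\<lambda>i. Re (D$i$i))"
  have dp: "d i > 0" for i using pos_diag_sq(3)[OF D] d_def by simp
  have Dd: "D = diagm d" using pos_diag_diagm[OF D] d_def by simp
  have psdD: "psd D" unfolding Dd by (rule psd_diagm) (simp add: dp less_imp_le)
  have had: "hadamard D (conj_mat D) = D ** D"
  proof -
    have "hadamard D (conj_mat D) = diagm (\<lambda>i. (d i)\<^sup>2)"
      unfolding Dd hadamard_def conj_mat_def diagm_def
      by (simp add: vec_eq_iff power2_eq_square)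
    then show ?thesis using pos_diag_sq(1)[OF D] d_def by simp
  qed
  have "I2 D = Inf {Sd D' powr (-1/2) | D'. pos_diag D' \<and> loewner_le (hadamard D (conj_mat D)) (D' ** D')}"
    by (rule I2_main[OF psdD])
  also have "... = Sd D powr (-1/2)"
  proof (rule cInf_eq_minimum)
    show "Sd D powr (-1/2) \<in> {Sd D' powr (-1/2) | D'. pos_diag D' \<and> loewner_le (hadamard D (conj_mat D)) (D' ** D')}"
      using D unfolding had by (auto intro: loewner_refl)
    fix y assume "y \<in> {Sd D' powr (-1/2) | D'. pos_diag D' \<and> loewner_le (hadamard D (conj_mat D)) (D' ** D')}"
    then obtain D' where y: "y = Sd D' powr (-1/2)" and D': "pos_diag D'" and L: "loewner_le (D ** D) (D' ** D')"
      unfolding had by blast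
    define d' where "d' = (\<lambda>i. Re (D'$i$i))"
    have dp': "d' i > 0" for i using pos_diag_sq(3)[OF D'] d'_def by simp
    have "(d i)\<^sup>2 \<le> (d' i)\<^sup>2" for i
    proof -
      have "0 \<le> Re (qf (D' ** D' - D ** D) (axis i 1) (axis i 1))"
        using L unfolding loewner_le_def psd_iff by blast
      also have "qf (D' ** D' - D ** D) (axis i 1) (axis i 1) = complex_of_real ((d' i)\<^sup>2 - (d i)\<^sup>2)"
        unfolding qf_axis pos_diag_sq(1)[OF D] pos_diag_sq(1)[OF D'] diagm_def d_def d'_def by simp
      finally show "(d i)\<^sup>2 \<le> (d' i)\<^sup>2" by simp
    qed
    have "Sd D' \<le> Sd D"
      unfolding Sd_def
    proof (rule sum_mono)
      fix i
      have "1 / (d' i)\<^sup>2 \<le> 1 / (d i)\<^sup>2"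
      proof (rule divide_left_mono)
        show "(d i)\<^sup>2 \<le> (d' i)\<^sup>2" by fact
        show "0 \<le> (1::real)" by simp
        show "0 < (d' i)\<^sup>2 * (d i)\<^sup>2" using dp[of i] dp'[of i] by simp
      qed
      then show "1 / (Re (D'$i$i))\<^sup>2 \<le> 1 / (Re (D$i$i))\<^sup>2" unfolding d_def d'_def .
    qed
    show "Sd D powr (-1/2) \<le> y" unfolding y
      by (rule powr_mono2') (use Sd_pos[OF D'] \<open>Sd D' \<le> Sd D\<close> in auto)
  qed
  finally show ?thesis .
qed

theorem corollary3p4:
  fixes A :: "complex^'n^'n"
  assumes "psd A"
  shows "I2 A = Inf {(\<Sum>i\<in>UNIV. 1 / (Re (D$i$i))\<^sup>2) powr (-1/2) | D.
                      pos_diag D \<and> loewner_le (hadamard A (conj_mat A)) (D ** D)}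
       \<and> I2 A = Inf {I2 D | D. pos_diag D \<and> loewner_le (hadamard A (conj_mat A)) (D ** D)}"
proof
  show 1: "I2 A = Inf {(\<Sum>i\<in>UNIV. 1 / (Re (D$i$i))\<^sup>2) powr (-1/2) | D.
                      pos_diag D \<and> loewner_le (hadamard A (conj_mat A)) (D ** D)}"
    using I2_main[OF assms] unfolding Sd_def .
  have "{I2 D | D. pos_diag D \<and> loewner_le (hadamard A (conj_mat A)) (D ** D)}
      = {(\<Sum>i\<in>UNIV. 1 / (Re (D$i$i))\<^sup>2) powr (-1/2) | D.
                      pos_diag D \<and> loewner_le (hadamard A (conj_mat A)) (D ** D)}"
  proof (rule set_eqI, rule iffI)
    fix x assume "x \<in> {I2 D | D. pos_diag D \<and> loewner_le (hadamard A (conj_mat A)) (D ** D)}"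
    then obtain D where "x = I2 D" "pos_diag D" "loewner_le (hadamard A (conj_mat A)) (D ** D)" by blast
    moreover have "I2 D = (\<Sum>i\<in>UNIV. 1 / (Re (D$i$i))\<^sup>2) powr (-1/2)"
      using I2_diag[OF \<open>pos_diag D\<close>] unfolding Sd_def .
    ultimately show "x \<in> {(\<Sum>i\<in>UNIV. 1 / (Re (D$i$i))\<^sup>2) powr (-1/2) | D.
                      pos_diag D \<and> loewner_le (hadamard A (conj_mat A)) (D ** D)}" by blast
  next
    fix x assume "x \<in> {(\<Sum>i\<in>UNIV. 1 / (Re (D$i$i))\<^sup>2) powr (-1/2) | D.
                      pos_diag D \<and> loewner_le (hadamard A (conj_mat A)) (D ** D)}"
    then obtain D where "x = (\<Sum>i\<in>UNIV. 1 / (Re (D$i$i))\<^sup>2) powr (-1/2)" "pos_diag D" "loewner_le (hadamard A (conj_mat A)) (D ** D)" by blast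
    moreover have "I2 D = (\<Sum>i\<in>UNIV. 1 / (Re (D$i$i))\<^sup>2) powr (-1/2)"
      using I2_diag[OF \<open>pos_diag D\<close>] unfolding Sd_def .
    ultimately show "x \<in> {I2 D | D. pos_diag D \<and> loewner_le (hadamard A (conj_mat A)) (D ** D)}"
      by (intro CollectI exI[of _ D]) simp
  qed
  then show "I2 A = Inf {I2 D | D. pos_diag D \<and> loewner_le (hadamard A (conj_mat A)) (D ** D)}"
    using 1 by simp
qed

end
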